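(* Let $\mathcal{T}\in\mathbb{K}^{R\times R\times 2}$ have $\mathbb{K}$-rank $R$ with CPD $[\![\mathbf{A},\mathbf{B},\mathbf{C}]\!]$, where $\mathbf{C}$ has columns $\mathbf{c}_1,\dots,\mathbf{c}_R$ of unit norm, and let $\mathscr{L}_1,\dots,\mathscr{L}_R$ be the JGE values of $\mathcal{T}$, $\mathscr{L}_r=\mathrm{span}(\mathbf{c}_r)$. Let $\mathcal{E}\in\mathbb{K}^{R\times R\times 2}$ satisfy $$\|\mathcal{E}\|_{\mathrm{sp}}<\frac{\sigma_{\min}(\mathbf{A})\,\sigma_{\min}(\mathbf{B})\,\min_{i\neq j}\chi(\mathscr{L}_i,\mathscr{L}_j)}{2}.$$ Then $\mathcal{T}+\mathcal{E}$ is slice mix invertible and has border $\mathbb{C}$-rank equal to $R$.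
   Context: $\mathbb{K}$ denotes $\mathbb{R}$ or $\mathbb{C}$; $\sigma_{\min}$ is the smallest (possibly zero) singular value. CPD $[\![\mathbf{A},\mathbf{B},\mathbf{C}]\!]=\sum_r\mathbf{a}_r\otimes\mathbf{b}_r\otimes\mathbf{c}_r$ with the minimal number of rank one terms ($\mathbb{K}$-rank). Border $\mathbb{C}$-rank: least $R$ such that the tensor is a limit of tensors of complex rank at most $R$. A tensor is slice mix invertible if some linear combination of its frontal slices is invertible. A JGE value of $\mathcal{T}$ with slices $\mathbf{T}_k$ is $\mathrm{span}(\boldsymbol{\lambda})$ where $\mathbf{T}_\ell\mathbf{x}=\lambda_\ell\mathbf{y}$ for all $\ell$ for some nonzero $\mathbf{x},\mathbf{y}$. Chordal metric $\chi$: sine of the angle between one-dimensional subspaces. Spectral norm $\|\mathcal{M}\|_{\mathrm{sp}}=\max_{\|\mathbf{x}\|=\|\mathbf{y}\|=\|\mathbf{z}\|=1}|\mathcal{M}\cdot_1\mathbf{x}\cdot_2\mathbf{y}\cdot_3\mathbf{z}|$. *)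

theory Defs
  imports Complex_Main "Jordan_Normal_Form.Matrix"
begin

text \<open>Third-order tensors of size I x J x L are functions nat => nat => nat => complex,
  only the entries with indices i < I, j < J, k < L are relevant.
  Matrices of size m x n are functions nat => nat => complex (entries i < m, j < n).
  The field K is modelled as a subset of the complex numbers: either the reals or all of C.\<close>

type_synonym tensor3 = "nat \<Rightarrow> nat \<Rightarrow> nat \<Rightarrow> complex"
type_synonym nmat = "nat \<Rightarrow> nat \<Rightarrow> complex"

definition mat_in :: "complex set \<Rightarrow> nat \<Rightarrow> nat \<Rightarrow> nmat \<Rightarrow> bool" where
  "mat_in K m n M \<longleftrightarrow> (\<forall>i<m. \<forall>j<n. M i j \<in> K)"

definition vec_in :: "complex set \<Rightarrow> nat \<Rightarrow> (nat \<Rightarrow> complex) \<Rightarrow> bool" where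
  "vec_in K n x \<longleftrightarrow> (\<forall>i<n. x i \<in> K)"

definition tensor_in :: "complex set \<Rightarrow> nat \<Rightarrow> nat \<Rightarrow> nat \<Rightarrow> tensor3 \<Rightarrow> bool" where
  "tensor_in K I J L T \<longleftrightarrow> (\<forall>i<I. \<forall>j<J. \<forall>k<L. T i j k \<in> K)"

definition tensor_eq :: "nat \<Rightarrow> nat \<Rightarrow> nat \<Rightarrow> tensor3 \<Rightarrow> tensor3 \<Rightarrow> bool" where
  "tensor_eq I J L S T \<longleftrightarrow> (\<forall>i<I. \<forall>j<J. \<forall>k<L. S i j k = T i j k)"

definition tadd :: "tensor3 \<Rightarrow> tensor3 \<Rightarrow> tensor3" where
  "tadd S T = (\<lambda>i j k. S i j k + T i j k)"

definition cpd :: "nat \<Rightarrow> nmat \<Rightarrow> nmat \<Rightarrow> nmat \<Rightarrow> tensor3" where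
  "cpd n A B C = (\<lambda>i j k. \<Sum>r<n. A i r * B j r * C k r)"

definition rank_le :: "complex set \<Rightarrow> nat \<Rightarrow> nat \<Rightarrow> nat \<Rightarrow> tensor3 \<Rightarrow> nat \<Rightarrow> bool" where
  "rank_le K I J L T n \<longleftrightarrow>
     (\<exists>A B C. mat_in K I n A \<and> mat_in K J n B \<and> mat_in K L n C \<and> tensor_eq I J L T (cpd n A B C))"

definition tensor_rank :: "complex set \<Rightarrow> nat \<Rightarrow> nat \<Rightarrow> nat \<Rightarrow> tensor3 \<Rightarrow> nat" where
  "tensor_rank K I J L T = (LEAST n. rank_le K I J L T n)"

text \<open>Border C-rank: least n such that T is a limit of tensors of complex rank at most n
  (entrywise convergence = convergence in the finite-dimensional space).\<close>
definition border_rank_le :: "nat \<Rightarrow> nat \<Rightarrow> nat \<Rightarrow> tensor3 \<Rightarrow> nat \<Rightarrow> bool" where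
  "border_rank_le I J L T n \<longleftrightarrow>
     (\<exists>S :: nat \<Rightarrow> tensor3. (\<forall>m. rank_le UNIV I J L (S m) n) \<and>
        (\<forall>i<I. \<forall>j<J. \<forall>k<L. (\<lambda>m. S m i j k) \<longlonglongrightarrow> T i j k))"

definition border_rank :: "nat \<Rightarrow> nat \<Rightarrow> nat \<Rightarrow> tensor3 \<Rightarrow> nat" where
  "border_rank I J L T = (LEAST n. border_rank_le I J L T n)"

definition slice_mix_invertible :: "complex set \<Rightarrow> nat \<Rightarrow> nat \<Rightarrow> tensor3 \<Rightarrow> bool" where
  "slice_mix_invertible K n L T \<longleftrightarrow>
     (\<exists>c. vec_in K L c \<and> invertible_mat (mat n n (\<lambda>(i, j). \<Sum>k<L. c k * T i j k)))"

definition vnorm :: "nat \<Rightarrow> (nat \<Rightarrow> complex) \<Rightarrow> real" where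
  "vnorm n x = sqrt (\<Sum>i<n. (cmod (x i))\<^sup>2)"

definition vinner :: "nat \<Rightarrow> (nat \<Rightarrow> complex) \<Rightarrow> (nat \<Rightarrow> complex) \<Rightarrow> complex" where
  "vinner n x y = (\<Sum>i<n. x i * cnj (y i))"

definition col :: "nmat \<Rightarrow> nat \<Rightarrow> (nat \<Rightarrow> complex)" where
  "col M r = (\<lambda>i. M i r)"

definition mat_vec :: "nat \<Rightarrow> nmat \<Rightarrow> (nat \<Rightarrow> complex) \<Rightarrow> (nat \<Rightarrow> complex)" where
  "mat_vec n M x = (\<lambda>i. \<Sum>j<n. M i j * x j)"

definition sigma_min :: "nat \<Rightarrow> nmat \<Rightarrow> real" where
  "sigma_min n M = Inf {vnorm n (mat_vec n M x) | x. vnorm n x = 1}"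

text \<open>Chordal metric between the one-dimensional subspaces span(x) and span(y) of K^n
  (x, y nonzero): the sine of the angle between them.\<close>
definition chordal :: "nat \<Rightarrow> (nat \<Rightarrow> complex) \<Rightarrow> (nat \<Rightarrow> complex) \<Rightarrow> real" where
  "chordal n x y = sqrt (1 - (cmod (vinner n x y) / (vnorm n x * vnorm n y))\<^sup>2)"

definition spec_norm :: "complex set \<Rightarrow> nat \<Rightarrow> nat \<Rightarrow> nat \<Rightarrow> tensor3 \<Rightarrow> real" where
  "spec_norm K I J L M = Sup {cmod (\<Sum>i<I. \<Sum>j<J. \<Sum>k<L. M i j k * x i * y j * z k) | x y z.
      vec_in K I x \<and> vec_in K J y \<and> vec_in K L z \<and>
      vnorm I x = 1 \<and> vnorm J y = 1 \<and> vnorm L z = 1}"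

end

theory Submission
  imports Defs "HOL-Analysis.L2_Norm" "Jordan_Normal_Form.Determinant"
    "Jordan_Normal_Form.Schur_Decomposition" "Jordan_Normal_Form.Char_Poly"
begin


lemma sum2: "(\<Sum>k<2. f k) = f 0 + f (1::nat)"
  by (simp add: numeral_2_eq_2)

lemma vnorm_L2: "vnorm n x = L2_set (\<lambda>i. cmod (x i)) {..<n}"
  by (simp add: vnorm_def L2_set_def)

lemma vnorm_nonneg: "0 \<le> vnorm n x"
  by (simp add: vnorm_def sum_nonneg)

lemma vnorm_cong: "(\<And>i. i < n \<Longrightarrow> x i = y i) \<Longrightarrow> vnorm n x = vnorm n y"
  by (simp add: vnorm_def)

lemma vnorm_scale: "vnorm n (\<lambda>i. c * x i) = cmod c * vnorm n x"
proof -
  have "vnorm n (\<lambda>i. c * x i) = sqrt ((cmod c)^2 * (\<Sum>i<n. (cmod (x i))\<^sup>2))"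
    by (simp add: vnorm_def norm_mult power_mult_distrib sum_distrib_left)
  also have "\<dots> = cmod c * vnorm n x" by (simp add: vnorm_def real_sqrt_mult)
  finally show ?thesis .
qed

lemma vnorm_eq0: "vnorm n x = 0 \<longleftrightarrow> (\<forall>i<n. x i = 0)"
  by (auto simp: vnorm_L2 L2_set_eq_0_iff)

lemma vnorm_comp: "i < n \<Longrightarrow> cmod (x i) \<le> vnorm n x"
  unfolding vnorm_L2 by (rule member_le_L2_set) auto

lemma vnorm_sq: "complex_of_real ((vnorm n x)^2) = (\<Sum>i<n. x i * cnj (x i))"
proof -
  have "(vnorm n x)^2 = (\<Sum>i<n. (cmod (x i))\<^sup>2)" by (simp add: vnorm_def sum_nonneg)
  hence "complex_of_real ((vnorm n x)^2) = (\<Sum>i<n. complex_of_real ((cmod (x i))\<^sup>2))" by simp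
  also have "\<dots> = (\<Sum>i<n. x i * cnj (x i))" by (intro sum.cong refl, rule complex_norm_square)
  finally show ?thesis .
qed

lemma cs_sum: "cmod (\<Sum>i<n. a i * b i) \<le> vnorm n a * vnorm n b"
proof -
  have "cmod (\<Sum>i<n. a i * b i) \<le> (\<Sum>i<n. cmod (a i) * cmod (b i))"
    by (rule order_trans[OF norm_sum]) (simp add: norm_mult)
  also have "\<dots> = (\<Sum>i<n. \<bar>cmod (a i)\<bar> * \<bar>cmod (b i)\<bar>)" by simp
  also have "\<dots> \<le> vnorm n a * vnorm n b" unfolding vnorm_L2 by (rule L2_set_mult_ineq)
  finally show ?thesis .
qed

lemma mat_vec_scale: "mat_vec n M (\<lambda>j. c * y j) = (\<lambda>i. c * mat_vec n M y i)"
  by (simp add: mat_vec_def sum_distrib_left mult.assoc mult.left_commute)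

lemma sigma_min_le:
  shows "sigma_min n M * vnorm n y \<le> vnorm n (mat_vec n M y)"
proof (cases "vnorm n y = 0")
  case True then show ?thesis by (simp add: vnorm_nonneg)
next
  case False
  hence pos: "vnorm n y > 0" using vnorm_nonneg[of n y] by linarith
  define c where "c = complex_of_real (1 / vnorm n y)"
  have "vnorm n (\<lambda>i. c * y i) = 1" using pos by (simp only: vnorm_scale) (simp add: c_def norm_divide)
  hence mem: "vnorm n (mat_vec n M (\<lambda>i. c * y i)) \<in> {vnorm n (mat_vec n M x) | x. vnorm n x = 1}"
    by blast
  have "sigma_min n M \<le> vnorm n (mat_vec n M (\<lambda>i. c * y i))"
    unfolding sigma_min_def
    by (rule cInf_lower[OF mem]) (auto intro: bdd_belowI[where m=0] simp: vnorm_nonneg)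
  also have "\<dots> = vnorm n (mat_vec n M y) / vnorm n y"
    using pos by (simp only: mat_vec_scale vnorm_scale) (simp add: c_def norm_divide)
  finally show ?thesis using pos by (simp add: pos_le_divide_eq)
qed

lemma sigma_min_nonneg: assumes "n > 0" shows "sigma_min n M \<ge> 0"
proof -
  define e where "e = (\<lambda>i::nat. if i = 0 then (1::complex) else 0)"
  have "(\<Sum>i<n. (cmod (e i))\<^sup>2) = (\<Sum>i<n. if i = 0 then 1 else 0)"
    by (rule sum.cong) (auto simp: e_def)
  also have "\<dots> = 1" using assms by (simp add: sum.delta)
  finally have "vnorm n e = 1" by (simp add: vnorm_def)
  hence ne: "{vnorm n (mat_vec n M x) | x. vnorm n x = 1} \<noteq> {}" by blast
  show ?thesis unfolding sigma_min_def
    by (rule cInf_greatest[OF ne]) (auto simp: vnorm_nonneg)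
qed



lemma det_imp_inverse:
  fixes M :: "'a::field mat"
  assumes M: "M \<in> carrier_mat n n" and d: "det M \<noteq> 0"
  shows "\<exists>Mi \<in> carrier_mat n n. M * Mi = 1\<^sub>m n \<and> Mi * M = 1\<^sub>m n"
  using det_non_zero_imp_unit[OF M d, of "()"]
  unfolding Units_def ring_mat_def by auto

lemma det_imp_invertible:
  fixes M :: "'a::field mat"
  assumes M: "M \<in> carrier_mat n n" and d: "det M \<noteq> 0"
  shows "invertible_mat M"
proof -
  from det_imp_inverse[OF M d] obtain Mi where Mi: "Mi \<in> carrier_mat n n" "M * Mi = 1\<^sub>m n" "Mi * M = 1\<^sub>m n"
    by blast
  show ?thesis unfolding invertible_mat_def inverts_mat_def square_mat.simps
    using M Mi by (intro conjI exI[of _ Mi]) auto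
qed

lemma invertible_imp_det:
  fixes M :: "'a::field mat"
  assumes M: "M \<in> carrier_mat n n" and inv: "invertible_mat M"
  shows "det M \<noteq> 0"
proof -
  from inv obtain B where 1: "M * B = 1\<^sub>m (dim_row M)" and 2: "B * M = 1\<^sub>m (dim_row B)"
    unfolding invertible_mat_def inverts_mat_def by blast
  have "dim_col (M * B) = dim_col (1\<^sub>m (dim_row M))" using 1 by simp
  hence "dim_col B = n" using M by simp
  moreover have "dim_col (B * M) = dim_col (1\<^sub>m (dim_row B))" using 2 by simp
  hence "dim_row B = n" using M by simp
  ultimately have B: "B \<in> carrier_mat n n" by auto
  have "det M * det B = 1" using det_mult[OF M B] 1 M by (simp add: det_one)
  thus ?thesis by auto
qed

lemma mat_mult_vec_idx:
  assumes "i < n" "dim_vec v = n"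
  shows "(mat n n f *\<^sub>v v) $ i = (\<Sum>j<n. f (i,j) * v $ j)"
  using assms by (simp add: scalar_prod_def row_def atLeast0LessThan)

lemma not_inv_kernel:
  fixes f :: "nat \<times> nat \<Rightarrow> complex"
  assumes "\<not> invertible_mat (mat n n f)"
  shows "\<exists>x. (\<exists>i<n. x i \<noteq> 0) \<and> (\<forall>i<n. (\<Sum>j<n. f (i,j) * x j) = 0)"
proof -
  have M: "mat n n f \<in> carrier_mat n n" by simp
  have "det (mat n n f) = 0" using det_imp_invertible[OF M] assms by blast
  then obtain v where v: "v \<in> carrier_vec n" "v \<noteq> 0\<^sub>v n" "mat n n f *\<^sub>v v = 0\<^sub>v n"
    using det_0_iff_vec_prod_zero_field[OF M] by blast
  have "\<exists>i<n. v $ i \<noteq> 0" using v(1,2) by (auto simp: vec_eq_iff)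
  moreover have "\<forall>i<n. (\<Sum>j<n. f (i,j) * v $ j) = 0"
  proof (intro allI impI)
    fix i assume i: "i < n"
    have "(mat n n f *\<^sub>v v) $ i = 0" using v(3) i by simp
    thus "(\<Sum>j<n. f (i,j) * v $ j) = 0" using mat_mult_vec_idx[OF i carrier_vecD[OF v(1)]] by simp
  qed
  ultimately show ?thesis by blast
qed

lemma surj_of_inj:
  fixes B :: nmat
  assumes inj: "\<And>w. (\<forall>i<n. mat_vec n B w i = 0) \<Longrightarrow> (\<forall>j<n. w j = 0)"
  shows "\<exists>w. \<forall>i<n. mat_vec n B w i = g i"
proof -
  let ?B = "mat n n (\<lambda>(i,j). B i j)"
  have Bc: "?B \<in> carrier_mat n n" by simp
  have "det ?B \<noteq> 0"
  proof
    assume "det ?B = 0"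
    then obtain v where v: "v \<in> carrier_vec n" "v \<noteq> 0\<^sub>v n" "?B *\<^sub>v v = 0\<^sub>v n"
      using det_0_iff_vec_prod_zero_field[OF Bc] by blast
    have "\<forall>i<n. mat_vec n B (\<lambda>j. v $ j) i = 0"
    proof (intro allI impI)
      fix i assume i: "i < n"
      have "(?B *\<^sub>v v) $ i = 0" using v(3) i by simp
      thus "mat_vec n B (\<lambda>j. v $ j) i = 0" using mat_mult_vec_idx[OF i carrier_vecD[OF v(1)]] by (simp add: mat_vec_def)
    qed
    from inj[OF this] have "v = 0\<^sub>v n" using v(1) by (auto simp: vec_eq_iff)
    with v(2) show False by simp
  qed
  from det_imp_inverse[OF Bc this] obtain Bi where Bi: "Bi \<in> carrier_mat n n" "?B * Bi = 1\<^sub>m n" by blast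
  define w where "w = Bi *\<^sub>v vec n g"
  have wc: "w \<in> carrier_vec n" using Bi by (simp add: w_def)
  have "?B *\<^sub>v w = vec n g" unfolding w_def
    by (subst assoc_mult_mat_vec[symmetric, OF Bc Bi(1)]) (auto simp: Bi(2))
  have "\<forall>i<n. mat_vec n B (\<lambda>j. w $ j) i = g i"
  proof (intro allI impI)
    fix i assume i: "i < n"
    have "(?B *\<^sub>v w) $ i = g i" using \<open>?B *\<^sub>v w = vec n g\<close> i by simp
    thus "mat_vec n B (\<lambda>j. w $ j) i = g i"
      using mat_mult_vec_idx[OF i carrier_vecD[OF wc]] by (simp add: mat_vec_def)
  qed
  thus ?thesis by blast
qed

lemma sigma_T:
  fixes B :: nmat
  assumes pos: "sigma_min n B > 0"
  shows "sigma_min n B * vnorm n x \<le> vnorm n (\<lambda>r. \<Sum>j<n. B j r * x j)"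
proof -
  let ?s = "sigma_min n B"
  let ?u = "\<lambda>r. \<Sum>j<n. B j r * x j"
  have inj: "\<forall>j<n. w j = 0" if "\<forall>i<n. mat_vec n B w i = 0" for w
  proof -
    have "vnorm n (mat_vec n B w) = 0" using that by (simp add: vnorm_eq0)
    hence "?s * vnorm n w \<le> 0" using sigma_min_le[of n B w] by simp
    hence "vnorm n w = 0" using pos vnorm_nonneg[of n w] by (simp add: mult_le_0_iff)
    thus ?thesis by (simp add: vnorm_eq0)
  qed
  obtain w where w: "\<forall>i<n. mat_vec n B w i = cnj (x i)"
    using surj_of_inj[where g="\<lambda>i. cnj (x i)", OF inj] by blast
  have "complex_of_real ((vnorm n x)^2) = (\<Sum>i<n. x i * cnj (x i))" by (rule vnorm_sq)
  also have "\<dots> = (\<Sum>i<n. x i * (\<Sum>j<n. B i j * w j))" using w by (simp add: mat_vec_def)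
  also have "\<dots> = (\<Sum>i<n. \<Sum>j<n. x i * B i j * w j)" by (simp add: sum_distrib_left mult.assoc)
  also have "\<dots> = (\<Sum>j<n. \<Sum>i<n. x i * B i j * w j)" by (rule sum.swap)
  also have "\<dots> = (\<Sum>j<n. w j * ?u j)" by (simp add: sum_distrib_left mult_ac)
  finally have eq0: "complex_of_real ((vnorm n x)^2) = (\<Sum>j<n. w j * ?u j)" .
  have eq: "(vnorm n x)^2 = cmod (\<Sum>j<n. w j * ?u j)"
    unfolding eq0[symmetric] norm_of_real by simp
  have "vnorm n (mat_vec n B w) = vnorm n x"
  proof -
    have "vnorm n (mat_vec n B w) = vnorm n (\<lambda>i. cnj (x i))" using w by (intro vnorm_cong) auto
    thus ?thesis by (simp add: vnorm_def)
  qed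
  hence wb: "?s * vnorm n w \<le> vnorm n x" using sigma_min_le[of n B w] by simp
  have "?s * (vnorm n x)^2 \<le> ?s * (vnorm n w * vnorm n ?u)"
    unfolding eq using cs_sum[where n=n and a=w and b="?u"] pos by simp
  also have "\<dots> \<le> vnorm n x * vnorm n ?u"
    using wb vnorm_nonneg[of n ?u] by (simp add: mult.assoc[symmetric] mult_right_mono)
  finally have key: "?s * (vnorm n x)^2 \<le> vnorm n x * vnorm n ?u" .
  thus ?thesis
  proof (cases "vnorm n x = 0")
    case True thus ?thesis using vnorm_nonneg[of n ?u] by simp
  next
    case False
    hence "vnorm n x > 0" using vnorm_nonneg[of n x] by linarith
    moreover have "vnorm n x * (?s * vnorm n x) \<le> vnorm n x * vnorm n ?u"
      using key by (simp add: power2_eq_square mult_ac)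
    ultimately show ?thesis by simp
  qed
qed



lemma lagrange_c:
  fixes x0 x1 y0 y1 :: complex
  shows "(cmod (x0 * cnj y0 + x1 * cnj y1))^2 + (cmod (x0 * y1 - x1 * y0))^2
       = ((cmod x0)^2 + (cmod x1)^2) * ((cmod y0)^2 + (cmod y1)^2)"
  unfolding cmod_power2 by (simp add: algebra_simps power2_eq_square)

lemma vnorm2_unit: "vnorm 2 x = 1 \<Longrightarrow> (cmod (x 0))^2 + (cmod (x 1))^2 = 1"
  by (simp add: vnorm_def sum2)

lemma vnorm2_sq: "(vnorm 2 x)^2 = (cmod (x 0))^2 + (cmod (x 1))^2"
  by (simp add: vnorm_def sum2)

lemma chordal_det:
  assumes "vnorm 2 x = 1" "vnorm 2 y = 1"
  shows "chordal 2 x y = cmod (x 0 * y 1 - x 1 * y 0)"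
proof -
  have "(cmod (vinner 2 x y))^2 + (cmod (x 0 * y 1 - x 1 * y 0))^2 = 1"
    using lagrange_c[of "x 0" "y 0" "x 1" "y 1"] vnorm2_unit[OF assms(1)] vnorm2_unit[OF assms(2)]
    by (simp add: vinner_def sum2)
  hence "1 - (cmod (vinner 2 x y))^2 = (cmod (x 0 * y 1 - x 1 * y 0))^2" by simp
  thus ?thesis unfolding chordal_def using assms by simp
qed

lemma two_prod_le: fixes p q r s :: real
  assumes "p^2 + r^2 = 1" "q^2 + s^2 = 1"
  shows "p * q + r * s \<le> 1"
proof -
  have "0 \<le> (p - q)^2" by simp
  hence "2 * (p * q) \<le> p^2 + q^2" by (simp add: power2_diff algebra_simps)
  moreover have "0 \<le> (r - s)^2" by simp
  hence "2 * (r * s) \<le> r^2 + s^2" by (simp add: power2_diff algebra_simps)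
  ultimately show ?thesis using assms by linarith
qed

lemma chordal_le:
  assumes x: "vnorm 2 x = 1" and y: "vnorm 2 y = 1" and z: "vnorm 2 z = 1"
  shows "chordal 2 x y \<le> cmod (x 0 * z 0 + x 1 * z 1) + cmod (y 0 * z 0 + y 1 * z 1)"
proof -
  define ax where "ax = x 0 * z 0 + x 1 * z 1"
  define ay where "ay = y 0 * z 0 + y 1 * z 1"
  define bx where "bx = - x 0 * cnj (z 1) + x 1 * cnj (z 0)"
  define by' where "by' = - y 0 * cnj (z 1) + y 1 * cnj (z 0)"
  have zz: "z 0 * cnj (z 0) + z 1 * cnj (z 1) = 1"
  proof -
    have "complex_of_real ((vnorm 2 z)^2) = (\<Sum>i<2. z i * cnj (z i))" by (rule vnorm_sq)
    thus ?thesis using z by (simp add: sum2)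
  qed
  have "ax * by' - ay * bx = (x 0 * y 1 - x 1 * y 0) * (z 0 * cnj (z 0) + z 1 * cnj (z 1))"
    unfolding ax_def ay_def bx_def by'_def by (simp add: algebra_simps)
  hence det: "x 0 * y 1 - x 1 * y 0 = ax * by' - ay * bx" using zz by simp
  have bnd: "cmod (- v 0 * cnj (z 1) + v 1 * cnj (z 0)) \<le> 1" if v: "vnorm 2 v = 1" for v
  proof -
    have "cmod (- v 0 * cnj (z 1) + v 1 * cnj (z 0)) \<le> cmod (v 0) * cmod (z 1) + cmod (v 1) * cmod (z 0)"
      by (rule order_trans[OF norm_triangle_ineq]) (simp add: norm_mult)
    also have "\<dots> \<le> 1"
      using two_prod_le[of "cmod (v 0)" "cmod (v 1)" "cmod (z 1)" "cmod (z 0)"]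
        vnorm2_unit[OF v] vnorm2_unit[OF z] by (simp add: add.commute)
    finally show ?thesis .
  qed
  have "chordal 2 x y = cmod (ax * by' - ay * bx)" using chordal_det[OF x y] det by simp
  also have "\<dots> \<le> cmod ax * cmod by' + cmod ay * cmod bx"
    by (rule order_trans[OF norm_triangle_ineq4]) (simp add: norm_mult)
  also have "\<dots> \<le> cmod ax * 1 + cmod ay * 1"
    using bnd[OF x] bnd[OF y] unfolding bx_def by'_def
    by (intro add_mono mult_left_mono) auto
  finally show ?thesis unfolding ax_def ay_def by simp
qed

lemma chordal_le1: "chordal n x y \<le> 1"
proof -
  have "1 - (cmod (vinner n x y) / (vnorm n x * vnorm n y))\<^sup>2 \<le> 1" by simp
  hence "sqrt (1 - (cmod (vinner n x y) / (vnorm n x * vnorm n y))\<^sup>2) \<le> sqrt 1"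
    by (rule real_sqrt_le_mono)
  thus ?thesis by (simp add: chordal_def)
qed



definition Kok :: "complex set \<Rightarrow> bool" where "Kok K \<longleftrightarrow> K = \<real> \<or> K = UNIV"

lemma K_add: "Kok K \<Longrightarrow> a \<in> K \<Longrightarrow> b \<in> K \<Longrightarrow> a + b \<in> K" by (auto simp: Kok_def)
lemma K_mult: "Kok K \<Longrightarrow> a \<in> K \<Longrightarrow> b \<in> K \<Longrightarrow> a * b \<in> K" by (auto simp: Kok_def)
lemma K_div: "Kok K \<Longrightarrow> a \<in> K \<Longrightarrow> b \<in> K \<Longrightarrow> a / b \<in> K" by (auto simp: Kok_def)
lemma K_diff: "Kok K \<Longrightarrow> a \<in> K \<Longrightarrow> b \<in> K \<Longrightarrow> a - b \<in> K" by (auto simp: Kok_def)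
lemma K_uminus: "Kok K \<Longrightarrow> a \<in> K \<Longrightarrow> - a \<in> K" by (auto simp: Kok_def)
lemma K_cnj: "Kok K \<Longrightarrow> a \<in> K \<Longrightarrow> cnj a \<in> K" by (auto simp: Kok_def Reals_cnj_iff)
lemma K_of_real: "Kok K \<Longrightarrow> complex_of_real a \<in> K" by (auto simp: Kok_def)
lemma K_0: "Kok K \<Longrightarrow> 0 \<in> K" by (auto simp: Kok_def)
lemma K_1: "Kok K \<Longrightarrow> 1 \<in> K" by (auto simp: Kok_def)
lemma K_sum: "Kok K \<Longrightarrow> (\<And>i. i \<in> S \<Longrightarrow> f i \<in> K) \<Longrightarrow> (\<Sum>i\<in>S. f i) \<in> K"
  by (auto simp: Kok_def intro: sum_in_Reals)

lemmas K_intros = K_diff K_add K_mult K_div K_uminus K_cnj K_of_real K_0 K_1 K_sum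

definition e0 :: "nat \<Rightarrow> complex" where "e0 = (\<lambda>i. if i = 0 then 1 else 0)"

lemma e0_unit: "n > 0 \<Longrightarrow> vnorm n e0 = 1"
proof -
  assume n: "n > 0"
  have "(\<Sum>i<n. (cmod (e0 i))\<^sup>2) = (\<Sum>i<n. if i = 0 then 1 else 0)"
    by (rule sum.cong) (auto simp: e0_def)
  also have "\<dots> = 1" using n by (simp add: sum.delta)
  finally show ?thesis by (simp add: vnorm_def)
qed

lemma e0_in: "Kok K \<Longrightarrow> vec_in K n e0"
  by (auto simp: vec_in_def e0_def intro: K_intros)

definition spec_set :: "complex set \<Rightarrow> nat \<Rightarrow> nat \<Rightarrow> nat \<Rightarrow> tensor3 \<Rightarrow> real set" where
  "spec_set K I J L M = {cmod (\<Sum>i<I. \<Sum>j<J. \<Sum>k<L. M i j k * x i * y j * z k) | x y z.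
      vec_in K I x \<and> vec_in K J y \<and> vec_in K L z \<and>
      vnorm I x = 1 \<and> vnorm J y = 1 \<and> vnorm L z = 1}"

lemma spec_bdd: "bdd_above (spec_set K I J L M)"
proof (rule bdd_aboveI[where M="\<Sum>i<I. \<Sum>j<J. \<Sum>k<L. cmod (M i j k)"])
  fix a assume "a \<in> spec_set K I J L M"
  then obtain x y z where a: "a = cmod (\<Sum>i<I. \<Sum>j<J. \<Sum>k<L. M i j k * x i * y j * z k)"
    and u: "vnorm I x = 1" "vnorm J y = 1" "vnorm L z = 1"
    unfolding spec_set_def by blast
  have "a \<le> (\<Sum>i<I. cmod (\<Sum>j<J. \<Sum>k<L. M i j k * x i * y j * z k))" unfolding a by (rule norm_sum)
  also have "\<dots> \<le> (\<Sum>i<I. \<Sum>j<J. cmod (\<Sum>k<L. M i j k * x i * y j * z k))"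
    by (intro sum_mono norm_sum)
  also have "\<dots> \<le> (\<Sum>i<I. \<Sum>j<J. \<Sum>k<L. cmod (M i j k * x i * y j * z k))"
    by (intro sum_mono norm_sum)
  also have "\<dots> \<le> (\<Sum>i<I. \<Sum>j<J. \<Sum>k<L. cmod (M i j k))"
  proof (intro sum_mono)
    fix i j k assume i: "i \<in> {..<I}" and j: "j \<in> {..<J}" and k: "k \<in> {..<L}"
    have "cmod (x i) \<le> 1" "cmod (y j) \<le> 1" "cmod (z k) \<le> 1"
      using vnorm_comp[of i I x] vnorm_comp[of j J y] vnorm_comp[of k L z] i j k u by auto
    hence "cmod (x i) * cmod (y j) * cmod (z k) \<le> 1"
      by (metis mult_le_one norm_ge_zero mult_nonneg_nonneg)
    hence "cmod (M i j k) * (cmod (x i) * cmod (y j) * cmod (z k)) \<le> cmod (M i j k) * 1"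
      by (intro mult_left_mono) auto
    thus "cmod (M i j k * x i * y j * z k) \<le> cmod (M i j k)" by (simp add: norm_mult mult_ac)
  qed
  finally show "a \<le> (\<Sum>i<I. \<Sum>j<J. \<Sum>k<L. cmod (M i j k))" .
qed

lemma spec_upper: "a \<in> spec_set K I J L M \<Longrightarrow> a \<le> spec_norm K I J L M"
  unfolding spec_norm_def spec_set_def[symmetric] using spec_bdd by (rule cSup_upper[rotated])

lemma spec_nonneg:
  assumes "Kok K" "I > 0" "J > 0" "L > 0"
  shows "spec_norm K I J L M \<ge> 0"
proof -
  have "cmod (\<Sum>i<I. \<Sum>j<J. \<Sum>k<L. M i j k * e0 i * e0 j * e0 k) \<in> spec_set K I J L M"
    unfolding spec_set_def using assms e0_unit e0_in by blast
  from spec_upper[OF this] show ?thesis by (meson norm_ge_zero order_trans)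
qed

lemma spec_bound:
  assumes K: "Kok K" and E_in: "tensor_in K R R 2 E"
    and z: "vec_in K 2 z" "vnorm 2 z = 1" and x: "vec_in K R x" "vnorm R x = 1"
  shows "vnorm R (\<lambda>i. \<Sum>j<R. (\<Sum>k<2. z k * E i j k) * x j) \<le> spec_norm K R R 2 E"
proof -
  define v where "v = (\<lambda>i. \<Sum>j<R. (\<Sum>k<2. z k * E i j k) * x j)"
  have R: "R > 0" using x(2) by (cases R) (auto simp: vnorm_def)
  show ?thesis
  proof (cases "vnorm R v = 0")
    case True thus ?thesis using spec_nonneg[OF K R R, of 2 E] by (simp add: v_def)
  next
    case False
    hence pos: "vnorm R v > 0" using vnorm_nonneg[of R v] by linarith
    define y where "y = (\<lambda>i. cnj (v i) / complex_of_real (vnorm R v))"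
    have yK: "vec_in K R y" unfolding vec_in_def
    proof (intro allI impI)
      fix i assume i: "i < R"
      have "v i \<in> K" unfolding v_def using z(1) x(1) E_in i
        by (intro K_intros[OF K]) (auto simp: vec_in_def tensor_in_def)
      thus "y i \<in> K" unfolding y_def by (intro K_intros[OF K])
    qed
    have y1: "vnorm R y = 1"
    proof -
      have "vnorm R y = vnorm R (\<lambda>i. complex_of_real (1 / vnorm R v) * cnj (v i))"
        by (intro vnorm_cong) (simp add: y_def)
      also have "\<dots> = (1 / vnorm R v) * vnorm R (\<lambda>i. cnj (v i))" by (simp only: vnorm_scale) (simp add: norm_divide vnorm_nonneg)
      also have "vnorm R (\<lambda>i. cnj (v i)) = vnorm R v" by (simp add: vnorm_def)
      finally show ?thesis using pos by simp
    qed
    have "(\<Sum>i<R. \<Sum>j<R. \<Sum>k<2. E i j k * y i * x j * z k) = (\<Sum>i<R. y i * v i)"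
      unfolding v_def by (simp add: sum_distrib_left sum_distrib_right mult_ac)
    also have "\<dots> = (\<Sum>i<R. v i * cnj (v i)) / complex_of_real (vnorm R v)"
      by (simp add: y_def sum_divide_distrib mult_ac)
    also have "\<dots> = complex_of_real ((vnorm R v)^2) / complex_of_real (vnorm R v)"
      by (simp only: vnorm_sq)
    also have "\<dots> = complex_of_real (vnorm R v)" using pos by (simp add: power2_eq_square)
    finally have eq: "(\<Sum>i<R. \<Sum>j<R. \<Sum>k<2. E i j k * y i * x j * z k) = complex_of_real (vnorm R v)" .
    have "cmod (\<Sum>i<R. \<Sum>j<R. \<Sum>k<2. E i j k * y i * x j * z k) \<in> spec_set K R R 2 E"
      unfolding spec_set_def using yK y1 x z by blast
    from spec_upper[OF this] show ?thesis unfolding eq v_def[symmetric] using pos by simp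
  qed
qed



definition chset :: "nat \<Rightarrow> nmat \<Rightarrow> real set" where
  "chset R C = {chordal 2 (col C i) (col C j) | i j. i < R \<and> j < R \<and> i \<noteq> j}"

lemma chset_finite: "finite (chset R C)"
proof -
  have "chset R C \<subseteq> (\<lambda>(i,j). chordal 2 (col C i) (col C j)) ` ({..<R} \<times> {..<R})"
    unfolding chset_def by auto
  thus ?thesis by (rule finite_subset) auto
qed

lemma chset_min: "i < R \<Longrightarrow> j < R \<Longrightarrow> i \<noteq> j \<Longrightarrow> Min (chset R C) \<le> chordal 2 (col C i) (col C j)"
  by (rule Min_le[OF chset_finite]) (auto simp: chset_def)

lemma chset_le1: "R \<ge> 2 \<Longrightarrow> Min (chset R C) \<le> 1"
  using chset_min[of 0 R 1 C] chordal_le1[of 2 "col C 0" "col C 1"] by simp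

definition dd :: "nmat \<Rightarrow> (nat \<Rightarrow> complex) \<Rightarrow> nat \<Rightarrow> complex" where
  "dd C z r = (\<Sum>k<2. C k r * z k)"

lemma rot_norm:
  fixes a b :: real and c0 c1 :: complex
  shows "(cmod (complex_of_real a * (- c1) + complex_of_real b * cnj c0))^2
       + (cmod (complex_of_real a * c0 + complex_of_real b * cnj c1))^2
       = (a^2 + b^2) * ((cmod c0)^2 + (cmod c1)^2)"
  unfolding cmod_power2 by (simp add: algebra_simps power2_eq_square)

lemma exists_good_z:
  assumes K: "Kok K" and R2: "R \<ge> 2" and C: "mat_in K 2 R C"
    and C_unit: "\<forall>r<R. vnorm 2 (col C r) = 1"
    and s: "s > 0" and rho: "rho \<ge> 0" and small: "rho < s * Min (chset R C) / 2"
  shows "\<exists>z. vec_in K 2 z \<and> vnorm 2 z = 1 \<and> (\<forall>r<R. rho < s * cmod (dd C z r))"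
proof (rule ccontr)
  assume neg: "\<not> ?thesis"
  define \<delta> where "\<delta> = Min (chset R C)"
  define p0 where "p0 = (\<lambda>k::nat. if k = 0 then - C 1 0 else C 0 0)"
  define p1 where "p1 = (\<lambda>k::nat. cnj (C k 0))"
  define zt where "zt = (\<lambda>t k. complex_of_real (cos t) * p0 k + complex_of_real (sin t) * p1 k)"
  have c0: "(cmod (C 0 0))^2 + (cmod (C 1 0))^2 = 1"
    using vnorm2_unit[of "col C 0"] C_unit R2 by (simp add: col_def)
  have ztK: "vec_in K 2 (zt t)" for t
  proof -
    have "C 0 0 \<in> K" "C (Suc 0) 0 \<in> K" using C R2 by (auto simp: mat_in_def)
    thus ?thesis unfolding vec_in_def zt_def p0_def p1_def
      by (auto intro!: K_intros[OF K] simp: less_2_cases_iff)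
  qed
  have ztu: "vnorm 2 (zt t) = 1" for t
  proof -
    have "(vnorm 2 (zt t))^2 = (cos t ^2 + sin t ^2) * ((cmod (C 0 0))^2 + (cmod (C 1 0))^2)"
      unfolding vnorm2_sq using rot_norm[of "cos t" "C 1 0" "sin t" "C 0 0"]
      by (simp add: zt_def p0_def p1_def)
    hence "(vnorm 2 (zt t))^2 = 1" using c0 by simp
    thus ?thesis using vnorm_nonneg[of 2 "zt t"] by (simp add: power2_eq_1_iff)
  qed
  have d0: "dd C (zt t) 0 = complex_of_real (sin t)" for t
  proof -
    have "dd C (zt t) 0 = complex_of_real (sin t) * (C 0 0 * cnj (C 0 0) + C 1 0 * cnj (C 1 0))"
      unfolding dd_def sum2 zt_def p0_def p1_def by (simp add: algebra_simps)
    also have "C 0 0 * cnj (C 0 0) + C 1 0 * cnj (C 1 0) = complex_of_real ((cmod (C 0 0))^2 + (cmod (C 1 0))^2)"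
      by (simp only: of_real_add complex_norm_square)
    also have "\<dots> = 1" using c0 by simp
    finally show ?thesis by simp
  qed
  have bad: "\<forall>t. \<exists>r<R. s * cmod (dd C (zt t) r) \<le> rho"
    using neg ztK ztu by (meson not_less)
  define F where "F = (\<lambda>r. {t. s * cmod (dd C (zt t) r) \<le> rho})"
  have Fc: "closed (F r)" for r
    unfolding F_def dd_def zt_def by (intro closed_Collect_le continuous_intros)
  define e2 where "e2 = (\<Union>r\<in>{1..<R}. F r)"
  have e2c: "closed e2" unfolding e2_def using Fc by (intro closed_UN) auto
  have disj: "False" if "t \<in> F r" "t \<in> F q" "r < R" "q < R" "r \<noteq> q" for t r q
  proof -
    have "\<delta> \<le> chordal 2 (col C r) (col C q)" unfolding \<delta>_def using chset_min that by blast
    also have "\<dots> \<le> cmod (dd C (zt t) r) + cmod (dd C (zt t) q)"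
      using chordal_le[of "col C r" "col C q" "zt t"] C_unit that ztu
      by (simp add: dd_def sum2 col_def mult.commute)
    finally have "s * \<delta> \<le> s * cmod (dd C (zt t) r) + s * cmod (dd C (zt t) q)"
      using s by (metis distrib_left mult_le_cancel_left_pos)
    also have "\<dots> \<le> 2 * rho" using that(1,2) by (simp add: F_def)
    finally show False using small \<delta>_def by simp
  qed
  have conn: "connected {0..pi/2}" by (rule connected_Icc)
  have "F 0 \<inter> e2 \<inter> {0..pi/2} = {} \<or> True" by simp
  have A1: "F 0 \<inter> e2 \<inter> {0..pi/2} = {}"
    unfolding e2_def using disj R2 by fastforce
  have A2: "{0..pi/2} \<subseteq> F 0 \<union> e2"
  proof
    fix t assume "t \<in> {0..pi/2}"
    obtain r where r: "r < R" "s * cmod (dd C (zt t) r) \<le> rho" using bad by blast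
    show "t \<in> F 0 \<union> e2"
    proof (cases "r = 0")
      case True thus ?thesis using r by (simp add: F_def)
    next
      case False thus ?thesis using r by (auto simp: e2_def F_def)
    qed
  qed
  from connected_closedD[OF conn A1 A2 Fc e2c]
  have "F 0 \<inter> {0..pi/2} = {} \<or> e2 \<inter> {0..pi/2} = {}" .
  moreover have "0 \<in> F 0" using rho by (simp add: F_def d0)
  moreover have "pi/2 \<in> e2"
  proof -
    have d1: "dd C (zt (pi/2)) 0 = 1" unfolding d0 by simp
    have "s * Min (chset R C) \<le> s * 1" using chset_le1[OF R2, of C] s
      by (intro mult_left_mono) auto
    hence "rho < s" using small s by linarith
    hence "pi/2 \<notin> F 0" by (simp add: F_def d1)
    moreover have "pi/2 \<in> {0..pi/2}" using pi_gt_zero by simp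
    ultimately show ?thesis using A2 by blast
  qed
  ultimately show False using pi_gt_zero by (auto simp: less_imp_le)
qed



lemma real_kernel:
  assumes K: "Kok K" and f: "\<forall>i<n. \<forall>j<n. f i j \<in> K"
    and x0: "\<exists>i<n. x i \<noteq> 0" and ker: "\<forall>i<n. (\<Sum>j<n. f i j * x j) = 0"
  shows "\<exists>y. vec_in K n y \<and> vnorm n y = 1 \<and> (\<forall>i<n. (\<Sum>j<n. f i j * y j) = 0)"
proof -
  have "\<exists>y. vec_in K n y \<and> (\<exists>i<n. y i \<noteq> 0) \<and> (\<forall>i<n. (\<Sum>j<n. f i j * y j) = 0)"
  proof (cases "K = UNIV")
    case True thus ?thesis using x0 ker by (auto simp: vec_in_def)
  next
    case False
    hence KR: "K = \<real>" using K by (simp add: Kok_def)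
    define g where "g = (\<lambda>i j. Re (f i j))"
    have fr: "f i j = complex_of_real (g i j)" if "i < n" "j < n" for i j
    proof -
      have "f i j \<in> \<real>" using f that KR by simp
      thus ?thesis by (simp add: g_def complex_is_Real_iff complex_eq_iff)
    qed
    define xr where "xr = (\<lambda>j. complex_of_real (Re (x j)))"
    define xi where "xi = (\<lambda>j. complex_of_real (Im (x j)))"
    have kr: "(\<Sum>j<n. f i j * xr j) = 0" if i: "i < n" for i
    proof -
      have "(\<Sum>j<n. f i j * xr j) = complex_of_real (\<Sum>j<n. g i j * Re (x j))"
        unfolding xr_def by (simp add: fr[OF i])
      also have "(\<Sum>j<n. g i j * Re (x j)) = Re (\<Sum>j<n. f i j * x j)"
        by (simp add: Re_sum fr[OF i])
      finally show ?thesis using ker i by simp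
    qed
    have ki: "(\<Sum>j<n. f i j * xi j) = 0" if i: "i < n" for i
    proof -
      have "(\<Sum>j<n. f i j * xi j) = complex_of_real (\<Sum>j<n. g i j * Im (x j))"
        unfolding xi_def by (simp add: fr[OF i])
      also have "(\<Sum>j<n. g i j * Im (x j)) = Im (\<Sum>j<n. f i j * x j)"
        by (simp add: Im_sum fr[OF i])
      finally show ?thesis using ker i by simp
    qed
    obtain i0 where i0: "i0 < n" "x i0 \<noteq> 0" using x0 by blast
    have "xr i0 \<noteq> 0 \<or> xi i0 \<noteq> 0" using i0(2) by (auto simp: xr_def xi_def complex_eq_iff)
    moreover have "vec_in K n xr" "vec_in K n xi" using KR by (auto simp: vec_in_def xr_def xi_def)
    ultimately show ?thesis using kr ki i0(1) by blast
  qed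
  then obtain y where y: "vec_in K n y" "\<exists>i<n. y i \<noteq> 0" "\<forall>i<n. (\<Sum>j<n. f i j * y j) = 0" by blast
  have pos: "vnorm n y > 0" using y(2) vnorm_eq0[of n y] vnorm_nonneg[of n y] by force
  define c where "c = complex_of_real (1 / vnorm n y)"
  have "vnorm n (\<lambda>j. c * y j) = 1" using pos by (simp only: vnorm_scale) (simp add: c_def norm_divide)
  moreover have "vec_in K n (\<lambda>j. c * y j)" using y(1) unfolding vec_in_def c_def
    by (auto intro!: K_intros[OF K])
  moreover have "\<forall>i<n. (\<Sum>j<n. f i j * (c * y j)) = 0"
  proof (intro allI impI)
    fix i assume "i < n"
    have "(\<Sum>j<n. f i j * (c * y j)) = c * (\<Sum>j<n. f i j * y j)"
      by (simp add: sum_distrib_left mult_ac)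
    thus "(\<Sum>j<n. f i j * (c * y j)) = 0" using y(3) \<open>i < n\<close> by simp
  qed
  ultimately show ?thesis by blast
qed

lemma key_inj:
  assumes K: "Kok K" and R: "R > 0"
    and T_cpd: "tensor_eq R R 2 T (cpd R A B C)"
    and E_in: "tensor_in K R R 2 E"
    and z: "vec_in K 2 z" "vnorm 2 z = 1"
    and sA: "sigma_min R A > 0" and sB: "sigma_min R B > 0"
    and good: "\<forall>r<R. spec_norm K R R 2 E < sigma_min R A * sigma_min R B * cmod (dd C z r)"
    and x: "vec_in K R x" "vnorm R x = 1"
  shows "\<exists>i<R. (\<Sum>j<R. (\<Sum>k<2. z k * tadd T E i j k) * x j) \<noteq> 0"
proof (rule ccontr)
  assume "\<not> ?thesis"
  hence zero: "\<forall>i<R. (\<Sum>j<R. (\<Sum>k<2. z k * tadd T E i j k) * x j) = 0" by simp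
  define rho where "rho = spec_norm K R R 2 E"
  define u where "u = (\<lambda>r. \<Sum>j<R. B j r * x j)"
  define y where "y = (\<lambda>r. dd C z r * u r)"
  define w where "w = mat_vec R A y"
  define v where "v = (\<lambda>i. \<Sum>j<R. (\<Sum>k<2. z k * E i j k) * x j)"
  have split: "(\<Sum>j<R. (\<Sum>k<2. z k * tadd T E i j k) * x j) = w i + v i" if i: "i < R" for i
  proof -
    have Tij: "T i j k = (\<Sum>r<R. A i r * B j r * C k r)" if "j < R" "k < 2" for j k
      using T_cpd i that by (simp add: tensor_eq_def cpd_def)
    have "(\<Sum>j<R. (\<Sum>k<2. z k * tadd T E i j k) * x j)
        = (\<Sum>j<R. (\<Sum>k<2. z k * T i j k) * x j) + v i"
      by (simp add: v_def tadd_def sum2 algebra_simps sum.distrib)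
    also have "(\<Sum>j<R. (\<Sum>k<2. z k * T i j k) * x j)
        = (\<Sum>j<R. (z 0 * (\<Sum>r<R. A i r * B j r * C 0 r) + z 1 * (\<Sum>r<R. A i r * B j r * C 1 r)) * x j)"
      by (intro sum.cong refl) (simp add: sum2 Tij)
    also have "\<dots> = (\<Sum>j<R. \<Sum>r<R. A i r * (dd C z r * (B j r * x j)))"
    proof (intro sum.cong refl)
      fix j
      have "(\<Sum>r<R. A i r * (dd C z r * (B j r * x j)))
          = (\<Sum>r<R. (z 0 * x j) * (A i r * B j r * C 0 r) + (z 1 * x j) * (A i r * B j r * C 1 r))"
        by (intro sum.cong refl) (simp add: dd_def sum2 algebra_simps)
      also have "\<dots> = (z 0 * x j) * (\<Sum>r<R. A i r * B j r * C 0 r) + (z 1 * x j) * (\<Sum>r<R. A i r * B j r * C 1 r)"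
        by (simp only: sum.distrib sum_distrib_left)
      also have "\<dots> = (z 0 * (\<Sum>r<R. A i r * B j r * C 0 r) + z 1 * (\<Sum>r<R. A i r * B j r * C 1 r)) * x j"
        by (simp add: algebra_simps)
      finally show "(z 0 * (\<Sum>r<R. A i r * B j r * C 0 r) + z 1 * (\<Sum>r<R. A i r * B j r * C 1 r)) * x j
          = (\<Sum>r<R. A i r * (dd C z r * (B j r * x j)))" by simp
    qed
    also have "\<dots> = (\<Sum>r<R. \<Sum>j<R. A i r * (dd C z r * (B j r * x j)))" by (rule sum.swap)
    also have "\<dots> = w i" by (simp add: w_def mat_vec_def y_def u_def sum_distrib_left)
    finally show ?thesis .
  qed
  have wv: "vnorm R w = vnorm R v"
  proof -
    have "vnorm R w = vnorm R (\<lambda>i. - v i)"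
    proof (rule vnorm_cong)
      fix i assume i: "i < R"
      have "w i + v i = 0" using split[OF i] zero i by simp
      thus "w i = - v i" by (simp add: eq_neg_iff_add_eq_0)
    qed
    thus ?thesis by (simp add: vnorm_def)
  qed
  have vb: "vnorm R v \<le> rho" unfolding v_def rho_def by (rule spec_bound[OF K E_in z x])
  define m where "m = Min ((\<lambda>r. cmod (dd C z r)) ` {..<R})"
  have "m \<in> (\<lambda>r. cmod (dd C z r)) ` {..<R}" unfolding m_def using R by (intro Min_in) auto
  then obtain r0 where r0: "r0 < R" "m = cmod (dd C z r0)" by auto
  have mle: "m \<le> cmod (dd C z r)" if "r < R" for r unfolding m_def using that by (intro Min_le) auto
  have m0: "m \<ge> 0" using r0 by simp
  have h1: "sigma_min R A * vnorm R y \<le> vnorm R w" unfolding w_def by (rule sigma_min_le)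
  have h2: "m * vnorm R u \<le> vnorm R y"
  proof -
    have "m * vnorm R u = L2_set (\<lambda>r. m * cmod (u r)) {..<R}"
      unfolding vnorm_L2 using m0 by (rule L2_set_right_distrib)
    also have "\<dots> \<le> L2_set (\<lambda>r. cmod (y r)) {..<R}"
      using mle m0 by (intro L2_set_mono) (auto simp: y_def norm_mult mult_right_mono)
    finally show ?thesis by (simp add: vnorm_L2)
  qed
  have h3: "sigma_min R B \<le> vnorm R u" using sigma_T[OF sB, of x] x(2) by (simp add: u_def)
  have "rho < sigma_min R A * sigma_min R B * m" using good r0 by (simp add: rho_def)
  also have "\<dots> = sigma_min R A * (m * sigma_min R B)" by simp
  also have "\<dots> \<le> sigma_min R A * (m * vnorm R u)"
    using h3 m0 sA by (intro mult_left_mono) auto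
  also have "\<dots> \<le> sigma_min R A * vnorm R y" using h2 sA by (intro mult_left_mono) auto
  also have "\<dots> \<le> rho" using h1 wv vb by linarith
  finally show False by simp
qed



function ev :: "complex mat \<Rightarrow> nat \<Rightarrow> nat \<Rightarrow> complex" where
  "ev U j i = (if j < i then 0 else if i = j then 1 else
     (\<Sum>l\<in>{i<..j}. U $$ (i,l) * ev U j l) / (U $$ (j,j) - U $$ (i,i)))"
  by pat_completeness auto
termination by (relation "measure (\<lambda>(U,j,i). j - i)") auto

declare ev.simps[simp del]

lemma ev_gt: "j < i \<Longrightarrow> ev U j i = 0" by (simp add: ev.simps)
lemma ev_eq: "ev U j j = 1" by (simp add: ev.simps)
lemma ev_lt: "i < j \<Longrightarrow> ev U j i = (\<Sum>l\<in>{i<..j}. U $$ (i,l) * ev U j l) / (U $$ (j,j) - U $$ (i,i))"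
  by (simp add: ev.simps[of U j i])

lemma ev_eigen:
  assumes U: "U \<in> carrier_mat n n" and ut: "upper_triangular U"
    and dist: "\<forall>i<n. \<forall>j<n. i \<noteq> j \<longrightarrow> U $$ (i,i) \<noteq> U $$ (j,j)"
    and i: "i < n" and j: "j < n"
  shows "(\<Sum>l<n. U $$ (i,l) * ev U j l) = U $$ (j,j) * ev U j i"
proof -
  have low: "U $$ (i,l) = 0" if "l < i" for l using ut U i that by (auto simp: upper_triangular_def)
  have "(\<Sum>l<n. U $$ (i,l) * ev U j l) = (\<Sum>l\<in>{i..j}. U $$ (i,l) * ev U j l)"
  proof (rule sum.mono_neutral_right)
    show "{i..j} \<subseteq> {..<n}" using j by auto
    show "\<forall>l\<in>{..<n} - {i..j}. U $$ (i,l) * ev U j l = 0"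
      using low ev_gt by (auto simp: not_le)
  qed auto
  also have "\<dots> = U $$ (j,j) * ev U j i"
  proof (cases "j < i")
    case True thus ?thesis by (simp add: ev_gt)
  next
    case False
    hence ins: "{i..j} = insert i {i<..j}" by auto
    have "(\<Sum>l\<in>{i..j}. U $$ (i,l) * ev U j l) = U $$ (i,i) * ev U j i + (\<Sum>l\<in>{i<..j}. U $$ (i,l) * ev U j l)"
      unfolding ins by (subst sum.insert) auto
    also have "\<dots> = U $$ (j,j) * ev U j i"
    proof (cases "i = j")
      case True thus ?thesis by simp
    next
      case False
      hence ij: "i < j" using \<open>\<not> j < i\<close> by simp
      have nz: "U $$ (j,j) - U $$ (i,i) \<noteq> 0" using dist i j False by auto
      have "(\<Sum>l\<in>{i<..j}. U $$ (i,l) * ev U j l) = (U $$ (j,j) - U $$ (i,i)) * ev U j i"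
        using nz by (simp add: ev_lt[OF ij])
      thus ?thesis by (simp add: algebra_simps)
    qed
    finally show ?thesis .
  qed
  finally show ?thesis .
qed

definition dmat :: "nat \<Rightarrow> (nat \<Rightarrow> complex) \<Rightarrow> complex mat" where
  "dmat n d = mat n n (\<lambda>(i,j). if i = j then d i else 0)"

lemma dmat_dims[simp]: "dim_row (dmat n d) = n" "dim_col (dmat n d) = n" by (simp_all add: dmat_def)
lemma dmat_carrier[simp]: "dmat n d \<in> carrier_mat n n" by (simp add: dmat_def)

lemma mult_dmat_idx:
  assumes X: "X \<in> carrier_mat n n" and i: "i < n" and j: "j < n"
  shows "(X * dmat n d) $$ (i,j) = X $$ (i,j) * d j"
proof -
  have "(X * dmat n d) $$ (i,j) = (\<Sum>l\<in>{0..<n}. X $$ (i,l) * (if l = j then d j else 0))"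
    using X i j by (simp add: dmat_def scalar_prod_def row_def col_def cong: if_cong)
  also have "\<dots> = X $$ (i,j) * d j" using j by (simp add: if_distrib cong: if_cong)
  finally show ?thesis .
qed

lemma diag_upper:
  assumes U: "U \<in> carrier_mat n n" and ut: "upper_triangular U"
    and dist: "\<forall>i<n. \<forall>j<n. i \<noteq> j \<longrightarrow> U $$ (i,i) \<noteq> U $$ (j,j)"
  shows "\<exists>V Vi. V \<in> carrier_mat n n \<and> Vi \<in> carrier_mat n n \<and> V * Vi = 1\<^sub>m n \<and> Vi * V = 1\<^sub>m n
     \<and> U = V * dmat n (\<lambda>i. U $$ (i,i)) * Vi"
proof -
  define V where "V = mat n n (\<lambda>(i,j). ev U j i)"
  have Vc: "V \<in> carrier_mat n n" by (simp add: V_def)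
  have "upper_triangular V" by (auto simp: upper_triangular_def V_def ev_gt)
  hence "det V = prod_list (diag_mat V)" using det_upper_triangular Vc by blast
  also have "diag_mat V = replicate n 1"
    by (rule nth_equalityI) (auto simp: diag_mat_def V_def ev_eq)
  finally have "det V = 1" by simp
  then obtain Vi where Vi: "Vi \<in> carrier_mat n n" "V * Vi = 1\<^sub>m n" "Vi * V = 1\<^sub>m n"
    using det_imp_inverse[OF Vc] by auto
  let ?D = "dmat n (\<lambda>i. U $$ (i,i))"
  have UV: "U * V = V * ?D"
  proof (rule eq_matI)
    fix i j assume "i < dim_row (V * ?D)" "j < dim_col (V * ?D)"
    hence i: "i < n" and j: "j < n" using Vc by auto
    have "(U * V) $$ (i,j) = (\<Sum>l<n. U $$ (i,l) * ev U j l)"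
      using U i j by (simp add: V_def scalar_prod_def row_def col_def atLeast0LessThan)
    also have "\<dots> = U $$ (j,j) * ev U j i" by (rule ev_eigen[OF U ut dist i j])
    also have "\<dots> = (V * ?D) $$ (i,j)" using mult_dmat_idx[OF Vc i j] i j by (simp add: V_def)
    finally show "(U * V) $$ (i,j) = (V * ?D) $$ (i,j)" .
  qed (use U Vc in auto)
  have "U = U * (V * Vi)" using U Vi by simp
  also have "\<dots> = (U * V) * Vi" using U Vc Vi by (simp add: assoc_mult_mat)
  also have "\<dots> = V * ?D * Vi" by (simp add: UV)
  finally show ?thesis using Vc Vi by blast
qed



lemma cancel_left:
  fixes A B Z :: "complex mat"
  assumes "A \<in> carrier_mat n n" "B \<in> carrier_mat n n" "A * B = 1\<^sub>m n" "Z \<in> carrier_mat n m"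
  shows "A * (B * Z) = Z"
proof -
  have "A * (B * Z) = (A * B) * Z" using assoc_mult_mat[OF assms(1,2,4)] by simp
  also have "\<dots> = 1\<^sub>m n * Z" using assms(3) by simp
  also have "\<dots> = Z" using assms(4) by simp
  finally show ?thesis .
qed

lemma decomp_slices:
  fixes T' :: tensor3
  assumes inv: "invertible_mat (mat n n (\<lambda>(i,j). \<Sum>k<2. c k * T' i j k))" and n: "n > 0"
  shows "\<exists>\<alpha> \<beta> Q. \<forall>i<n. \<forall>j<n. \<forall>k<2. T' i j k = \<alpha> k * (\<Sum>k<2. c k * T' i j k) + \<beta> k * Q i j"
proof (cases "c 0 = 0")
  case False
  show ?thesis
    by (rule exI[of _ "\<lambda>k. if k = 0 then 1 / c 0 else 0"], rule exI[of _ "\<lambda>k. if k = 0 then - c 1 / c 0 else 1"],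
        rule exI[of _ "\<lambda>i j. T' i j 1"])
      (use False in \<open>auto simp: sum2 less_2_cases_iff field_simps\<close>)
next
  case True
  have c1: "c 1 \<noteq> 0"
  proof
    assume c1: "c 1 = 0"
    have "mat n n (\<lambda>(i,j). \<Sum>k<2. c k * T' i j k) = 0\<^sub>m n n"
      using True c1 by (intro eq_matI) (auto simp: sum2)
    hence "det (mat n n (\<lambda>(i,j). \<Sum>k<2. c k * T' i j k)) = 0" using n by simp
    with invertible_imp_det[OF _ inv, of n] show False by simp
  qed
  show ?thesis
    by (rule exI[of _ "\<lambda>k. if k = 0 then 0 else 1 / c 1"], rule exI[of _ "\<lambda>k. if k = 0 then 1 else 0"],
        rule exI[of _ "\<lambda>i j. T' i j 0"])
      (use True c1 in \<open>auto simp: sum2 less_2_cases_iff field_simps\<close>)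
qed

lemma exists_small_good:
  fixes U :: "complex mat"
  assumes e: "e > 0"
  shows "\<exists>t. 0 < t \<and> t < e \<and> (\<forall>i<n. \<forall>j<n. i \<noteq> j \<longrightarrow>
      U $$ (i,i) + complex_of_real t * of_nat i \<noteq> U $$ (j,j) + complex_of_real t * of_nat j)"
proof -
  define bad where "bad = {t::real. \<exists>i<n. \<exists>j<n. i \<noteq> j \<and>
      U $$ (i,i) + complex_of_real t * of_nat i = U $$ (j,j) + complex_of_real t * of_nat j}"
  have "bad \<subseteq> (\<lambda>(i,j). Re (U $$ (j,j) - U $$ (i,i)) / (real i - real j)) ` ({..<n} \<times> {..<n})"
  proof
    fix t assume "t \<in> bad"
    then obtain i j where ij: "i < n" "j < n" "i \<noteq> j"
      and eq: "U $$ (i,i) + complex_of_real t * of_nat i = U $$ (j,j) + complex_of_real t * of_nat j"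
      unfolding bad_def by blast
    have "Re (U $$ (i,i) + complex_of_real t * of_nat i) = Re (U $$ (j,j) + complex_of_real t * of_nat j)"
      using eq by simp
    hence "t * (real i - real j) = Re (U $$ (j,j) - U $$ (i,i))" by (simp add: algebra_simps)
    moreover have "real i - real j \<noteq> 0" using ij by simp
    ultimately have "t = Re (U $$ (j,j) - U $$ (i,i)) / (real i - real j)" by (simp add: field_simps)
    thus "t \<in> (\<lambda>(i,j). Re (U $$ (j,j) - U $$ (i,i)) / (real i - real j)) ` ({..<n} \<times> {..<n})"
      using ij by force
  qed
  hence fin: "finite bad" by (rule finite_subset) auto
  have "infinite ({0<..<e} - bad)" using e fin by (simp add: Diff_infinite_finite)
  then obtain t where "t \<in> {0<..<e} - bad" by (metis finite.emptyI ex_in_conv)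
  hence "0 < t" "t < e" "t \<notin> bad" by auto
  thus ?thesis unfolding bad_def by blast
qed



lemma assoc_n:
  fixes A B C :: "complex mat"
  assumes "A \<in> carrier_mat n n" "B \<in> carrier_mat n n" "C \<in> carrier_mat n n"
  shows "A * B * C = A * (B * C)"
  using assoc_mult_mat[OF assms] .

lemma rank_from_mats:
  fixes X Y :: "complex mat" and S :: tensor3 and \<alpha> \<beta> d :: "nat \<Rightarrow> complex"
  assumes X: "X \<in> carrier_mat n n" and Y: "Y \<in> carrier_mat n n"
    and eqS: "\<forall>i<n. \<forall>j<n. \<forall>k<2. S i j k = \<alpha> k * (X * Y) $$ (i,j) + \<beta> k * (X * dmat n d * Y) $$ (i,j)"
  shows "rank_le UNIV n n 2 S n"
  unfolding rank_le_def
proof (intro exI conjI)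
  show "mat_in UNIV n n (\<lambda>i r. X $$ (i,r))" "mat_in UNIV n n (\<lambda>j r. Y $$ (r,j))"
    "mat_in UNIV 2 n (\<lambda>k r. \<alpha> k + \<beta> k * d r)" by (auto simp: mat_in_def)
  show "tensor_eq n n 2 S (cpd n (\<lambda>i r. X $$ (i,r)) (\<lambda>j r. Y $$ (r,j)) (\<lambda>k r. \<alpha> k + \<beta> k * d r))"
    unfolding tensor_eq_def cpd_def
  proof (intro allI impI)
    fix i j k :: nat assume i: "i < n" and j: "j < n" and k: "k < 2"
    have XY: "(X * Y) $$ (i,j) = (\<Sum>r<n. X $$ (i,r) * Y $$ (r,j))"
      using X Y i j by (simp add: scalar_prod_def row_def col_def atLeast0LessThan)
    have XDY: "(X * dmat n d * Y) $$ (i,j) = (\<Sum>r<n. X $$ (i,r) * d r * Y $$ (r,j))"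
    proof -
      have "(X * dmat n d * Y) $$ (i,j) = (\<Sum>r<n. (X * dmat n d) $$ (i,r) * Y $$ (r,j))"
        using X Y i j by (simp add: scalar_prod_def row_def col_def atLeast0LessThan)
      also have "\<dots> = (\<Sum>r<n. X $$ (i,r) * d r * Y $$ (r,j))"
        using mult_dmat_idx[OF X i] by simp
      finally show ?thesis .
    qed
    show "S i j k = (\<Sum>r<n. X $$ (i,r) * Y $$ (r,j) * (\<alpha> k + \<beta> k * d r))"
    proof -
      have "(\<Sum>r<n. X $$ (i,r) * Y $$ (r,j) * (\<alpha> k + \<beta> k * d r))
          = (\<Sum>r<n. \<alpha> k * (X $$ (i,r) * Y $$ (r,j)) + \<beta> k * (X $$ (i,r) * d r * Y $$ (r,j)))"
        by (intro sum.cong refl) (simp add: algebra_simps)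
      also have "\<dots> = \<alpha> k * (\<Sum>r<n. X $$ (i,r) * Y $$ (r,j)) + \<beta> k * (\<Sum>r<n. X $$ (i,r) * d r * Y $$ (r,j))"
        by (simp only: sum.distrib sum_distrib_left)
      moreover have "S i j k = \<alpha> k * (X * Y) $$ (i,j) + \<beta> k * (X * dmat n d * Y) $$ (i,j)"
        using eqS i j k by blast
      ultimately show ?thesis unfolding XY XDY by simp
    qed
  qed
qed

lemma border_upper:
  fixes T' :: tensor3
  assumes inv: "invertible_mat (mat n n (\<lambda>(i,j). \<Sum>k<2. c k * T' i j k))"
  shows "border_rank_le n n 2 T' n"
proof (cases "n = 0")
  case True
  show ?thesis unfolding border_rank_le_def rank_le_def
    by (rule exI[of _ "\<lambda>q. T'"]) (auto simp: True mat_in_def tensor_eq_def)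
next
  case False
  hence n: "n > 0" by simp
  define P where "P = (\<lambda>i j. \<Sum>k<2. c k * T' i j k)"
  obtain \<alpha> \<beta> Q where dec: "\<forall>i<n. \<forall>j<n. \<forall>k<2. T' i j k = \<alpha> k * P i j + \<beta> k * Q i j"
    using decomp_slices[OF inv n] unfolding P_def by blast
  define Pm where "Pm = mat n n (\<lambda>(i,j). P i j)"
  define Qm where "Qm = mat n n (\<lambda>(i,j). Q i j)"
  have Pc: "Pm \<in> carrier_mat n n" and Qc: "Qm \<in> carrier_mat n n" by (simp_all add: Pm_def Qm_def)
  have "det Pm \<noteq> 0" using invertible_imp_det[OF _ inv, of n] by (simp add: Pm_def P_def)
  then obtain Pinv where Pinv: "Pinv \<in> carrier_mat n n" "Pm * Pinv = 1\<^sub>m n"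
    using det_imp_inverse[OF Pc] by blast
  define N where "N = Pinv * Qm"
  have Nc: "N \<in> carrier_mat n n" using Pinv Qc by (simp add: N_def)
  obtain es where "char_poly N = (\<Prod>a\<leftarrow>es. [:- a, 1:])" using char_poly_factorized[OF Nc] by blast
  from schur_decomposition_exists[OF Nc this]
  obtain U where Uc: "U \<in> carrier_mat n n" and ut: "upper_triangular U" and sim: "similar_mat N U" by blast
  from sim obtain W W' where "similar_mat_wit N U W W'" unfolding similar_mat_def by blast
  hence Wc: "W \<in> carrier_mat n n" and W'c: "W' \<in> carrier_mat n n" and WW: "W * W' = 1\<^sub>m n"
    and NW: "N = W * U * W'"
    using Nc unfolding similar_mat_wit_def Let_def by auto
  define Di where "Di = dmat n (\<lambda>i. of_nat i)"
  have Dic: "Di \<in> carrier_mat n n" by (simp add: Di_def)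
  define G where "G = Pm * W * Di * W'"
  define good where "good = (\<lambda>t::real. \<forall>i<n. \<forall>j<n. i \<noteq> j \<longrightarrow>
      U $$ (i,i) + complex_of_real t * of_nat i \<noteq> U $$ (j,j) + complex_of_real t * of_nat j)"
  have rank: "rank_le UNIV n n 2 (\<lambda>i j k. T' i j k + complex_of_real t * \<beta> k * G $$ (i,j)) n"
    if g: "good t" for t
  proof -
    define Ut where "Ut = U + complex_of_real t \<cdot>\<^sub>m Di"
    have Utc: "Ut \<in> carrier_mat n n" using Uc Dic by (simp add: Ut_def)
    have diagUt: "Ut $$ (i,i) = U $$ (i,i) + complex_of_real t * of_nat i" if "i < n" for i
      using that Uc by (simp add: Ut_def Di_def dmat_def)
    have utU: "upper_triangular Ut"
      using ut Uc unfolding upper_triangular_def by (auto simp: Ut_def Di_def dmat_def)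
    have dist: "\<forall>i<n. \<forall>j<n. i \<noteq> j \<longrightarrow> Ut $$ (i,i) \<noteq> Ut $$ (j,j)"
      using g diagUt unfolding good_def by auto
    obtain V Vi where Vc: "V \<in> carrier_mat n n" and Vic: "Vi \<in> carrier_mat n n"
      and VV: "V * Vi = 1\<^sub>m n" and UtV: "Ut = V * dmat n (\<lambda>i. Ut $$ (i,i)) * Vi"
      using diag_upper[OF Utc utU dist] by blast
    define D where "D = dmat n (\<lambda>i. Ut $$ (i,i))"
    have Dc: "D \<in> carrier_mat n n" by (simp add: D_def)
    define X where "X = Pm * W * V"
    define Y where "Y = Vi * W'"
    have Xc: "X \<in> carrier_mat n n" using Pc Wc Vc by (simp add: X_def)
    have Yc: "Y \<in> carrier_mat n n" using Vic W'c by (simp add: Y_def)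
    have F1: "X * Y = Pm"
    proof -
      have "X * Y = Pm * (W * (V * (Vi * W')))"
        using Pc Wc Vc Vic W'c by (simp add: X_def Y_def assoc_n)
      also have "V * (Vi * W') = W'" by (rule cancel_left[OF Vc Vic VV W'c])
      also have "Pm * (W * W') = Pm" using WW Pc by simp
      finally show ?thesis .
    qed
    have F2: "X * D * Y = Qm + complex_of_real t \<cdot>\<^sub>m G"
    proof -
      have "X * D * Y = Pm * (W * ((V * D * Vi) * W'))"
        using Pc Wc Vc Vic W'c Dc by (simp add: X_def Y_def assoc_n)
      also have "V * D * Vi = Ut" using UtV by (simp add: D_def)
      also have "Ut * W' = U * W' + complex_of_real t \<cdot>\<^sub>m (Di * W')"
      proof -
        have "Ut * W' = U * W' + (complex_of_real t \<cdot>\<^sub>m Di) * W'"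
          unfolding Ut_def by (rule add_mult_distrib_mat[OF Uc _ W'c]) (use Dic in simp)
        also have "(complex_of_real t \<cdot>\<^sub>m Di) * W' = complex_of_real t \<cdot>\<^sub>m (Di * W')"
          by (rule mult_smult_assoc_mat[OF Dic W'c])
        finally show ?thesis .
      qed
      also have "W * (U * W' + complex_of_real t \<cdot>\<^sub>m (Di * W')) = W * (U * W') + complex_of_real t \<cdot>\<^sub>m (W * (Di * W'))"
      proof -
        have "W * (U * W' + complex_of_real t \<cdot>\<^sub>m (Di * W')) = W * (U * W') + W * (complex_of_real t \<cdot>\<^sub>m (Di * W'))"
          by (rule mult_add_distrib_mat[OF Wc, of _ n]) (use Uc W'c Dic in simp_all)
        also have "W * (complex_of_real t \<cdot>\<^sub>m (Di * W')) = complex_of_real t \<cdot>\<^sub>m (W * (Di * W'))"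
          by (rule mult_smult_distrib[OF Wc, of _ n]) (use W'c Dic in simp)
        finally show ?thesis .
      qed
      also have "Pm * (W * (U * W') + complex_of_real t \<cdot>\<^sub>m (W * (Di * W')))
          = Pm * (W * (U * W')) + complex_of_real t \<cdot>\<^sub>m (Pm * (W * (Di * W')))"
      proof -
        have "Pm * (W * (U * W') + complex_of_real t \<cdot>\<^sub>m (W * (Di * W'))) = Pm * (W * (U * W')) + Pm * (complex_of_real t \<cdot>\<^sub>m (W * (Di * W')))"
          by (rule mult_add_distrib_mat[OF Pc, of _ n]) (use Wc Uc W'c Dic in simp_all)
        also have "Pm * (complex_of_real t \<cdot>\<^sub>m (W * (Di * W'))) = complex_of_real t \<cdot>\<^sub>m (Pm * (W * (Di * W')))"
          by (rule mult_smult_distrib[OF Pc, of _ n]) (use Wc W'c Dic in simp)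
        finally show ?thesis .
      qed
      also have "W * (U * W') = N" using NW Wc Uc W'c by (simp add: assoc_n)
      also have "Pm * N = Qm" unfolding N_def by (rule cancel_left[OF Pc Pinv Qc])
      also have "Pm * (W * (Di * W')) = G" unfolding G_def using Pc Wc Dic W'c by (simp add: assoc_n)
      finally show ?thesis .
    qed
    show ?thesis
    proof (rule rank_from_mats[OF Xc Yc, where \<alpha>=\<alpha> and \<beta>=\<beta> and d="\<lambda>i. Ut $$ (i,i)"])
      show "\<forall>i<n. \<forall>j<n. \<forall>k<2. T' i j k + complex_of_real t * \<beta> k * G $$ (i, j) =
          \<alpha> k * (X * Y) $$ (i, j) + \<beta> k * (X * dmat n (\<lambda>i. Ut $$ (i, i)) * Y) $$ (i, j)"
      proof (intro allI impI)
        fix i j k :: nat assume i: "i < n" and j: "j < n" and k: "k < 2"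
        have Gc: "G \<in> carrier_mat n n" using Pc Wc Dic W'c unfolding G_def by (meson mult_carrier_mat)
        have e1: "(X * dmat n (\<lambda>i. Ut $$ (i, i)) * Y) $$ (i, j) = Q i j + complex_of_real t * G $$ (i,j)"
        proof -
          have "(X * dmat n (\<lambda>i. Ut $$ (i, i)) * Y) $$ (i, j) = (Qm + complex_of_real t \<cdot>\<^sub>m G) $$ (i,j)"
            using F2 unfolding D_def by (rule arg_cong)
          also have "\<dots> = Q i j + complex_of_real t * G $$ (i,j)"
            using i j Qc Gc by (simp add: Qm_def)
          finally show ?thesis .
        qed
        have e2: "(X * Y) $$ (i,j) = P i j"
        proof -
          have "(X * Y) $$ (i,j) = Pm $$ (i,j)" using F1 by (rule arg_cong)
          thus ?thesis using i j by (simp add: Pm_def)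
        qed
        have e3: "T' i j k = \<alpha> k * P i j + \<beta> k * Q i j" using dec i j k by blast
        show "T' i j k + complex_of_real t * \<beta> k * G $$ (i, j) =
          \<alpha> k * (X * Y) $$ (i, j) + \<beta> k * (X * dmat n (\<lambda>i. Ut $$ (i, i)) * Y) $$ (i, j)"
          unfolding e1 e2 e3 by (simp add: algebra_simps)
      qed
    qed
  qed
  have ex: "\<exists>t. 0 < t \<and> t < 1 / (real q + 1) \<and> good t" for q
    using exists_small_good[of "1 / (real q + 1)" n U] unfolding good_def by auto
  define tq where "tq = (\<lambda>q. SOME t. 0 < t \<and> t < 1 / (real q + 1) \<and> good t)"
  have tq: "0 < tq q \<and> tq q < 1 / (real q + 1) \<and> good (tq q)" for q
    unfolding tq_def by (rule someI_ex[OF ex])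
  have t0: "tq \<longlonglongrightarrow> 0"
  proof (rule tendsto_sandwich[of "\<lambda>q. 0" _ _ "\<lambda>q. 1 / (real q + 1)"])
    show "\<forall>\<^sub>F q in sequentially. 0 \<le> tq q" using tq by (simp add: less_imp_le)
    show "\<forall>\<^sub>F q in sequentially. tq q \<le> 1 / (real q + 1)" using tq by (simp add: less_imp_le)
    show "(\<lambda>q. 0::real) \<longlonglongrightarrow> 0" by simp
    have "(\<lambda>q. 1 / (real q + 1)) = (\<lambda>q. inverse (real (Suc q)))"
      by (simp add: inverse_eq_divide add.commute)
    thus "(\<lambda>q. 1 / (real q + 1)) \<longlonglongrightarrow> 0" using LIMSEQ_inverse_real_of_nat by simp
  qed
  show ?thesis unfolding border_rank_le_def
  proof (intro exI conjI allI impI)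
    fix q show "rank_le UNIV n n 2 (\<lambda>i j k. T' i j k + complex_of_real (tq q) * \<beta> k * G $$ (i,j)) n"
      by (rule rank) (use tq in blast)
  next
    fix i j k :: nat assume "i < n" "j < n" "k < 2"
    have h1: "(\<lambda>q. complex_of_real (tq q)) \<longlonglongrightarrow> complex_of_real 0" by (rule tendsto_of_real[OF t0])
    have h2: "(\<lambda>q. complex_of_real (tq q) * (\<beta> k * G $$ (i,j))) \<longlonglongrightarrow> complex_of_real 0 * (\<beta> k * G $$ (i,j))"
      by (rule tendsto_mult[OF h1 tendsto_const])
    have "(\<lambda>q. T' i j k + complex_of_real (tq q) * (\<beta> k * G $$ (i,j))) \<longlonglongrightarrow> T' i j k + complex_of_real 0 * (\<beta> k * G $$ (i,j))"
      by (rule tendsto_add[OF tendsto_const h2])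
    thus "(\<lambda>q. T' i j k + complex_of_real (tq q) * \<beta> k * G $$ (i,j)) \<longlonglongrightarrow> T' i j k" by (simp add: mult.assoc)
  qed
qed



lemma det_mat_formula:
  "det (mat n n f) = (\<Sum>p | p permutes {0..<n}. of_int (sign p) * (\<Prod>i=0..<n. f (i, p i)))"
proof -
  have "det (mat n n f) = (\<Sum>p | p permutes {0..<n}. of_int (sign p) * (\<Prod>i=0..<n. mat n n f $$ (i, p i)))"
    by (simp add: det_def)
  also have "\<dots> = (\<Sum>p | p permutes {0..<n}. of_int (sign p) * (\<Prod>i=0..<n. f (i, p i)))"
  proof (intro sum.cong refl arg_cong[where f="\<lambda>x. _ * x"] prod.cong)
    fix p i assume p: "p \<in> {p. p permutes {0..<n}}" and i: "i \<in> {0..<n}"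
    have "p i \<in> {0..<n}" using p i by (simp add: permutes_in_image)
    thus "mat n n f $$ (i, p i) = f (i, p i)" using i by simp
  qed
  finally show ?thesis .
qed

lemma det_tendsto:
  fixes g :: "nat \<Rightarrow> nat \<Rightarrow> nat \<Rightarrow> complex"
  assumes lim: "\<forall>i<n. \<forall>j<n. (\<lambda>q. g q i j) \<longlonglongrightarrow> h i j"
  shows "(\<lambda>q. det (mat n n (\<lambda>(i,j). g q i j))) \<longlonglongrightarrow> det (mat n n (\<lambda>(i,j). h i j))"
  unfolding det_mat_formula
proof (intro tendsto_sum tendsto_mult tendsto_const tendsto_prod)
  fix p i assume p: "p \<in> {p. p permutes {0..<n}}" and i: "i \<in> {0..<n}"
  have "p i \<in> {0..<n}" using p i by (simp add: permutes_in_image)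
  thus "(\<lambda>q. case (i, p i) of (i, j) \<Rightarrow> g q i j) \<longlonglongrightarrow> (case (i, p i) of (i, j) \<Rightarrow> h i j)"
    using lim i by simp
qed

lemma rank_det0:
  fixes S :: tensor3
  assumes rk: "rank_le UNIV n n 2 S m" and mn: "m < n"
  shows "det (mat n n (\<lambda>(i,j). \<Sum>k<2. c k * S i j k)) = 0"
proof -
  from rk obtain A B C where eq: "tensor_eq n n 2 S (cpd m A B C)" unfolding rank_le_def by blast
  define dc where "dc = (\<lambda>r. \<Sum>k<2. c k * C k r)"
  define A0 where "A0 = mat n n (\<lambda>(i,r). if r < m then A i r else 0)"
  define B0 where "B0 = mat n n (\<lambda>(r,j). if r < m then B j r * dc r else 0)"
  have A0c: "A0 \<in> carrier_mat n n" and B0c: "B0 \<in> carrier_mat n n" by (simp_all add: A0_def B0_def)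
  have prod: "mat n n (\<lambda>(i,j). \<Sum>k<2. c k * S i j k) = A0 * B0"
  proof (rule eq_matI)
    fix i j assume "i < dim_row (A0 * B0)" "j < dim_col (A0 * B0)"
    hence i: "i < n" and j: "j < n" using A0c B0c by auto
    have "(A0 * B0) $$ (i,j) = (\<Sum>r\<in>{0..<n}. A0 $$ (i,r) * B0 $$ (r,j))"
      using A0c B0c i j by (simp add: scalar_prod_def row_def col_def)
    also have "\<dots> = (\<Sum>r\<in>{..<m}. A0 $$ (i,r) * B0 $$ (r,j))"
      by (rule sum.mono_neutral_right) (use mn i j in \<open>auto simp: A0_def B0_def\<close>)
    also have "\<dots> = (\<Sum>r<m. A i r * B j r * dc r)"
      by (rule sum.cong) (use mn i j in \<open>auto simp: A0_def B0_def\<close>)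
    also have "\<dots> = (\<Sum>r<m. c 0 * (A i r * B j r * C 0 r) + c 1 * (A i r * B j r * C 1 r))"
      by (intro sum.cong refl) (simp add: dc_def sum2 algebra_simps)
    also have "\<dots> = c 0 * (\<Sum>r<m. A i r * B j r * C 0 r) + c 1 * (\<Sum>r<m. A i r * B j r * C 1 r)"
      by (simp only: sum.distrib sum_distrib_left)
    also have "\<dots> = c 0 * S i j 0 + c 1 * S i j 1"
      using eq i j by (simp add: tensor_eq_def cpd_def)
    also have "\<dots> = (\<Sum>k<2. c k * S i j k)" by (simp add: sum2)
    finally show "mat n n (\<lambda>(i,j). \<Sum>k<2. c k * S i j k) $$ (i,j) = (A0 * B0) $$ (i,j)" using i j by simp
  qed (use A0c B0c in auto)
  have "det A0 = 0"
  proof -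
    define v where "v = vec n (\<lambda>j. if j = n - 1 then (1::complex) else 0)"
    have vc: "v \<in> carrier_vec n" by (simp add: v_def)
    have "v \<noteq> 0\<^sub>v n"
    proof
      assume "v = 0\<^sub>v n"
      hence "v $ (n - 1) = 0" using mn by simp
      thus False using mn by (simp add: v_def)
    qed
    moreover have "A0 *\<^sub>v v = 0\<^sub>v n"
    proof (rule eq_vecI)
      fix i assume "i < dim_vec (0\<^sub>v n :: complex vec)"
      hence i: "i < n" by simp
      have "(A0 *\<^sub>v v) $ i = (\<Sum>j<n. (\<lambda>(i,r). if r < m then A i r else 0) (i,j) * v $ j)"
        unfolding A0_def by (rule mat_mult_vec_idx[OF i]) (simp add: v_def)
      also have "\<dots> = (\<Sum>j<n. (if j < m then A i j else 0) * v $ j)" by simp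
      also have "\<dots> = 0" by (rule sum.neutral) (use mn in \<open>auto simp: v_def\<close>)
      finally show "(A0 *\<^sub>v v) $ i = 0\<^sub>v n $ i" using i by simp
    qed (use A0c in simp)
    ultimately show ?thesis using det_0_iff_vec_prod_zero_field[OF A0c] vc by blast
  qed
  thus ?thesis unfolding prod using det_mult[OF A0c B0c] by simp
qed

lemma border_lower:
  fixes T' :: tensor3
  assumes inv: "invertible_mat (mat n n (\<lambda>(i,j). \<Sum>k<2. c k * T' i j k))" and mn: "m < n"
  shows "\<not> border_rank_le n n 2 T' m"
proof
  assume "border_rank_le n n 2 T' m"
  then obtain S where rk: "\<forall>q. rank_le UNIV n n 2 (S q) m"
    and lim: "\<forall>i<n. \<forall>j<n. \<forall>k<2. (\<lambda>q. S q i j k) \<longlonglongrightarrow> T' i j k"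
    unfolding border_rank_le_def by blast
  have lim2: "\<forall>i<n. \<forall>j<n. (\<lambda>q. \<Sum>k<2. c k * S q i j k) \<longlonglongrightarrow> (\<Sum>k<2. c k * T' i j k)"
  proof (intro allI impI)
    fix i j assume i: "i < n" and j: "j < n"
    show "(\<lambda>q. \<Sum>k<2. c k * S q i j k) \<longlonglongrightarrow> (\<Sum>k<2. c k * T' i j k)"
    proof (rule tendsto_sum, rule tendsto_mult_left)
      fix k assume "k \<in> {..<(2::nat)}"
      thus "(\<lambda>q. S q i j k) \<longlonglongrightarrow> T' i j k" using lim i j by simp
    qed
  qed
  have "(\<lambda>q. det (mat n n (\<lambda>(i,j). \<Sum>k<2. c k * S q i j k))) \<longlonglongrightarrow> det (mat n n (\<lambda>(i,j). \<Sum>k<2. c k * T' i j k))"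
    by (rule det_tendsto[OF lim2])
  moreover have "(\<lambda>q. det (mat n n (\<lambda>(i,j). \<Sum>k<2. c k * S q i j k))) = (\<lambda>q. 0)"
    using rank_det0[OF _ mn] rk by auto
  ultimately have "(\<lambda>q. 0) \<longlonglongrightarrow> det (mat n n (\<lambda>(i,j). \<Sum>k<2. c k * T' i j k))" by simp
  hence "det (mat n n (\<lambda>(i,j). \<Sum>k<2. c k * T' i j k)) = 0"
    by (simp add: LIMSEQ_const_iff)
  moreover have "det (mat n n (\<lambda>(i,j). \<Sum>k<2. c k * T' i j k)) \<noteq> 0"
    by (rule invertible_imp_det[OF _ inv, of n]) simp
  ultimately show False by simp
qed



theorem proposition4p4:
  fixes K :: "complex set" and R :: nat and A B C :: nmat and T E :: tensor3
  assumes K: "K = \<real> \<or> K = UNIV"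
    and R2: "R \<ge> 2"
    and A: "mat_in K R R A" and B: "mat_in K R R B" and C: "mat_in K 2 R C"
    and T_cpd: "tensor_eq R R 2 T (cpd R A B C)"
    and T_rank: "tensor_rank K R R 2 T = R"
    and C_unit: "\<forall>r<R. vnorm 2 (col C r) = 1"
    and E_in: "tensor_in K R R 2 E"
    and E_small: "spec_norm K R R 2 E <
       sigma_min R A * sigma_min R B *
       Min {chordal 2 (col C i) (col C j) | i j. i < R \<and> j < R \<and> i \<noteq> j} / 2"
  shows "slice_mix_invertible K R 2 (tadd T E) \<and> border_rank R R 2 (tadd T E) = R"
proof -
  have Kok: "Kok K" using K by (simp add: Kok_def)
  have R0: "R > 0" using R2 by simp
  define rho where "rho = spec_norm K R R 2 E"
  define sA where "sA = sigma_min R A"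
  define sB where "sB = sigma_min R B"
  define \<delta> where "\<delta> = Min (chset R C)"
  have rho0: "rho \<ge> 0" unfolding rho_def by (rule spec_nonneg[OF Kok R0 R0]) simp
  have sA0: "sA \<ge> 0" unfolding sA_def by (rule sigma_min_nonneg[OF R0])
  have sB0: "sB \<ge> 0" unfolding sB_def by (rule sigma_min_nonneg[OF R0])
  have small: "rho < sA * sB * \<delta> / 2"
    using E_small unfolding rho_def sA_def sB_def \<delta>_def chset_def by simp
  have "sA * sB * \<delta> > 0" using small rho0 by linarith
  hence sApos: "sA > 0" and sBpos: "sB > 0"
    using sA0 sB0 by (auto simp: zero_less_mult_iff le_less)
  have spos: "sA * sB > 0" using sApos sBpos by simp
  have small2: "rho < (sA * sB) * Min (chset R C) / 2" using small by (simp add: \<delta>_def)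
  obtain z where zK: "vec_in K 2 z" and z1: "vnorm 2 z = 1"
    and good: "\<forall>r<R. rho < (sA * sB) * cmod (dd C z r)"
    using exists_good_z[OF Kok R2 C C_unit spos rho0 small2] by blast
  have inv: "invertible_mat (mat R R (\<lambda>(i,j). \<Sum>k<2. z k * tadd T E i j k))"
  proof (rule ccontr)
    assume ninv: "\<not> ?thesis"
    obtain x where x0: "\<exists>i<R. x i \<noteq> 0"
      and ker: "\<forall>i<R. (\<Sum>j<R. (\<lambda>(i,j). \<Sum>k<2. z k * tadd T E i j k) (i,j) * x j) = 0"
      using not_inv_kernel[OF ninv] by blast
    have ker': "\<forall>i<R. (\<Sum>j<R. (\<Sum>k<2. z k * tadd T E i j k) * x j) = 0" using ker by simp
    have fK: "\<forall>i<R. \<forall>j<R. (\<Sum>k<2. z k * tadd T E i j k) \<in> K"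
    proof (intro allI impI)
      fix i j assume i: "i < R" and j: "j < R"
      have "tadd T E i j k \<in> K" if k: "k < 2" for k
      proof -
        have "T i j k = (\<Sum>r<R. A i r * B j r * C k r)" using T_cpd i j k by (simp add: tensor_eq_def cpd_def)
        moreover have "(\<Sum>r<R. A i r * B j r * C k r) \<in> K"
          using A B C i j k by (intro K_intros[OF Kok]) (auto simp: mat_in_def)
        moreover have "E i j k \<in> K" using E_in i j k by (simp add: tensor_in_def)
        ultimately show ?thesis unfolding tadd_def by (simp add: K_add[OF Kok])
      qed
      thus "(\<Sum>k<2. z k * tadd T E i j k) \<in> K"
        using zK by (intro K_intros[OF Kok]) (auto simp: vec_in_def)
    qed
    obtain y where yK: "vec_in K R y" and y1: "vnorm R y = 1"
      and yker: "\<forall>i<R. (\<Sum>j<R. (\<Sum>k<2. z k * tadd T E i j k) * y j) = 0"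
      using real_kernel[OF Kok fK x0 ker'] by blast
    have "\<exists>i<R. (\<Sum>j<R. (\<Sum>k<2. z k * tadd T E i j k) * y j) \<noteq> 0"
      by (rule key_inj[OF Kok R0 T_cpd E_in zK z1 sApos[unfolded sA_def] sBpos[unfolded sB_def] _ yK y1])
         (use good in \<open>simp add: rho_def sA_def sB_def\<close>)
    with yker show False by blast
  qed
  have smi: "slice_mix_invertible K R 2 (tadd T E)"
    unfolding slice_mix_invertible_def using zK inv by blast
  have "border_rank R R 2 (tadd T E) = R"
    unfolding border_rank_def
  proof (rule Least_equality)
    show "border_rank_le R R 2 (tadd T E) R" by (rule border_upper[OF inv])
    show "R \<le> m" if "border_rank_le R R 2 (tadd T E) m" for m
      using border_lower[OF inv, of m] that by (meson not_le)
  qed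
  with smi show ?thesis by simp
qed

end
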